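(* Let $(G,\phi,(g_1,\dots,g_n))$ be an $n$-expansion group. Then $\#G = \#L_\bullet(G) \leq 2^{n2^{n-1}-2^n+n+1}$. In particular, $\{g_1,\dots,g_n\}$ is a generating set for $G$.
   Context: $V_{[n]}=\mathbb{F}_2^n$ with basis $e_1,\dots,e_n$. An $n$-expansion group is a triple $(G,\phi,(g_1,\dots,g_n))$: $G$ a group, $\phi:G\to V_{[n]}$ a homomorphism with $\phi(g_i)=e_i$, $g_i^2=1$ for all $i$, $\ker\phi$ an elementary abelian $2$-group, and $[G,G]=\ker\phi$. With $G^{(1)}=G$, $G^{(i+1)}=[G,G^{(i)}]$, set $L_\bullet(G)=\bigoplus_{m\geq1}G^{(m)}/G^{(m+1)}$ (a set whose cardinality is $\#L_\bullet(G)$). *)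

theory Defs
  imports "HOL-Algebra.Algebra"
begin

text \<open>The group V_[n] = F_2^n, modelled as subsets of {1..n} under symmetric difference;
  the basis vector e_i is the singleton {i}.\<close>
definition Vn :: "nat \<Rightarrow> nat set monoid" where
  "Vn n = \<lparr>partial_object.carrier = Pow {1..n}, monoid.mult = (\<lambda>A B. (A - B) \<union> (B - A)), monoid.one = {}\<rparr>"

definition comm_subgroup :: "('a, 'b) monoid_scheme \<Rightarrow> 'a set \<Rightarrow> 'a set \<Rightarrow> 'a set" where
  "comm_subgroup G A B =
     generate G {a \<otimes>\<^bsub>G\<^esub> b \<otimes>\<^bsub>G\<^esub> inv\<^bsub>G\<^esub> a \<otimes>\<^bsub>G\<^esub> inv\<^bsub>G\<^esub> b | a b. a \<in> A \<and> b \<in> B}"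

text \<open>Lower central series, 0-indexed: lcs G k is G^(k+1) in the paper's notation.\<close>
fun lcs :: "('a, 'b) monoid_scheme \<Rightarrow> nat \<Rightarrow> 'a set" where
  "lcs G 0 = carrier G"
| "lcs G (Suc k) = comm_subgroup G (carrier G) (lcs G k)"

text \<open>The underlying set of the direct sum L(G) = (+)_{m>=1} G^(m)/G^(m+1):
  finitely supported families x with x m a coset of G^(m+1) in G^(m) for m >= 1
  (entry at index 0 fixed to the empty set).\<close>
definition Lbul :: "('a, 'b) monoid_scheme \<Rightarrow> (nat \<Rightarrow> 'a set) set" where
  "Lbul G = {x. x 0 = {} \<and>
     (\<forall>m\<ge>1. x m \<in> rcosets\<^bsub>G\<lparr>carrier := lcs G (m - 1)\<rparr>\<^esub> (lcs G m)) \<and>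
     finite {m. m \<ge> 1 \<and> x m \<noteq> lcs G m}}"

definition expansion_group ::
  "nat \<Rightarrow> ('a, 'b) monoid_scheme \<Rightarrow> ('a \<Rightarrow> nat set) \<Rightarrow> (nat \<Rightarrow> 'a) \<Rightarrow> bool" where
  "expansion_group n G \<phi> g \<longleftrightarrow>
     group G \<and> \<phi> \<in> hom G (Vn n) \<and>
     (\<forall>i\<in>{1..n}. g i \<in> carrier G \<and> \<phi> (g i) = {i} \<and> g i \<otimes>\<^bsub>G\<^esub> g i = \<one>\<^bsub>G\<^esub>) \<and>
     (\<forall>x\<in>kernel G (Vn n) \<phi>. \<forall>y\<in>kernel G (Vn n) \<phi>. x \<otimes>\<^bsub>G\<^esub> y = y \<otimes>\<^bsub>G\<^esub> x) \<and>
     (\<forall>x\<in>kernel G (Vn n) \<phi>. x \<otimes>\<^bsub>G\<^esub> x = \<one>\<^bsub>G\<^esub>) \<and>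
     comm_subgroup G (carrier G) (carrier G) = kernel G (Vn n) \<phi>"

end

theory Submission
  imports Defs
begin
lemma sum_pow_insert:
  assumes A: "finite A" and a: "a \<notin> A"
  shows "(\<Sum>T\<in>Pow (insert a A). f T) = (\<Sum>T\<in>Pow A. f T) + (\<Sum>T\<in>Pow A. f (insert a T))"
proof -
  have d: "Pow A \<inter> insert a ` Pow A = {}" using a by auto
  have i: "inj_on (insert a) (Pow A)"
  proof (rule inj_onI)
    fix S T assume S: "S \<in> Pow A" and T: "T \<in> Pow A" and e: "insert a S = insert a T"
    have "a \<notin> S" "a \<notin> T" using S T a by auto
    thus "S = T" using e insert_ident by metis
  qed
  have "(\<Sum>T\<in>Pow (insert a A). f T) = (\<Sum>T\<in>Pow A \<union> insert a ` Pow A. f T)" by (simp add: Pow_insert)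
  also have "\<dots> = (\<Sum>T\<in>Pow A. f T) + (\<Sum>T\<in>insert a ` Pow A. f T)"
    by (rule sum.union_disjoint) (use A d in auto)
  also have "(\<Sum>T\<in>insert a ` Pow A. f T) = (\<Sum>T\<in>Pow A. f (insert a T))" using sum.reindex[OF i] by simp
  finally show ?thesis .
qed

lemma pow_sums: "finite A \<Longrightarrow> (\<Sum>T\<in>Pow A. card T) * 2 = card A * 2 ^ card A \<and>
   (\<Sum>T\<in>Pow A. card T - 1) + 2 ^ card A = (\<Sum>T\<in>Pow A. card T) + 1"
proof (induction A rule: finite_induct)
  case empty thus ?case by simp
next
  case (insert a A)
  define S where "S = (\<Sum>T\<in>Pow A. card T)"
  define h where "h = (\<Sum>T\<in>Pow A. card T - 1)"
  have IH: "S * 2 = card A * 2 ^ card A" "h + 2 ^ card A = S + 1" using insert(3) by (simp_all add: S_def h_def)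
  have cT: "\<And>T. T \<in> Pow A \<Longrightarrow> card (insert a T) = Suc (card T)"
    using insert(1,2) by (auto intro!: card_insert_disjoint intro: finite_subset)
  have "(\<Sum>T\<in>Pow A. card (insert a T)) = (\<Sum>T\<in>Pow A. Suc (card T))" using cT by (rule sum.cong[OF refl])
  also have "\<dots> = S + 2 ^ card A" using insert(1) by (simp add: S_def sum_Suc card_Pow)
  finally have s1: "(\<Sum>T\<in>Pow (insert a A). card T) = S + (S + 2 ^ card A)"
    using sum_pow_insert[OF insert(1,2), of card] by (simp add: S_def)
  have "(\<Sum>T\<in>Pow A. card (insert a T) - 1) = (\<Sum>T\<in>Pow A. card T)" using cT by (intro sum.cong) auto
  hence s2: "(\<Sum>T\<in>Pow (insert a A). card T - 1) = h + S"
    using sum_pow_insert[OF insert(1,2), of "\<lambda>T. card T - 1"] by (simp add: S_def h_def)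
  have cA: "card (insert a A) = Suc (card A)" using insert(1,2) by simp
  have e1: "(S + (S + 2 ^ card A)) * 2 = Suc (card A) * 2 ^ Suc (card A)"
  proof -
    have "(S + (S + 2 ^ card A)) * 2 = 2 * (S * 2) + 2 * 2 ^ card A" by simp
    also have "\<dots> = 2 * (card A * 2 ^ card A) + 2 * 2 ^ card A" using IH(1) by simp
    also have "\<dots> = Suc (card A) * 2 ^ Suc (card A)" by (simp add: algebra_simps)
    finally show ?thesis .
  qed
  have e2: "h + S + 2 ^ Suc (card A) = S + (S + 2 ^ card A) + 1" using IH(2) by simp
  show ?case using e1 e2 s1 s2 cA by simp
qed

locale eg = group +
  fixes n :: nat and \<phi> :: "'a \<Rightarrow> nat set" and g :: "nat \<Rightarrow> 'a"
  assumes EG: "expansion_group n G \<phi> g"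
begin
definition K where "K = {x \<in> carrier G. \<phi> x = {}}"
lemma hom: "\<phi> \<in> hom G (Vn n)" using EG by (simp add: expansion_group_def)
lemma phi_mult: "x \<in> carrier G \<Longrightarrow> y \<in> carrier G \<Longrightarrow> \<phi> (x \<otimes> y) = (\<phi> x - \<phi> y) \<union> (\<phi> y - \<phi> x)"
  using hom_mult[OF hom] by (simp add: Vn_def)
lemma phi_sub: "x \<in> carrier G \<Longrightarrow> \<phi> x \<subseteq> {1..n}"
  using hom_in_carrier[OF hom] by (force simp add: Vn_def)
lemma kerK: "kernel G (Vn n) \<phi> = K" by (simp add: kernel_def K_def Vn_def)
lemma g_car: "i \<in> {1..n} \<Longrightarrow> g i \<in> carrier G" using EG by (simp add: expansion_group_def)
lemma g_phi: "i \<in> {1..n} \<Longrightarrow> \<phi> (g i) = {i}" using EG by (simp add: expansion_group_def)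
lemma g_sq: "i \<in> {1..n} \<Longrightarrow> g i \<otimes> g i = \<one>" using EG by (simp add: expansion_group_def)
lemma g_inv: "i \<in> {1..n} \<Longrightarrow> inv (g i) = g i"
  using g_sq g_car inv_char by metis
lemma K_comm: "x \<in> K \<Longrightarrow> y \<in> K \<Longrightarrow> x \<otimes> y = y \<otimes> x" using EG kerK by (simp add: expansion_group_def)
lemma K_sq: "x \<in> K \<Longrightarrow> x \<otimes> x = \<one>" using EG kerK by (simp add: expansion_group_def)
lemma K_car: "x \<in> K \<Longrightarrow> x \<in> carrier G" by (simp add: K_def)
lemma K_inv: "x \<in> K \<Longrightarrow> inv x = x" using K_sq K_car inv_char by metis
lemma K_one: "\<one> \<in> K" using phi_mult[of \<one> \<one>] by (simp add: K_def)
lemma K_mult: "x \<in> K \<Longrightarrow> y \<in> K \<Longrightarrow> x \<otimes> y \<in> K" by (simp add: K_def phi_mult)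
lemma comm_eq: "comm_subgroup G (carrier G) (carrier G) = K" using EG kerK by (simp add: expansion_group_def)
lemma phi_one: "\<phi> \<one> = {}" using phi_mult[of \<one> \<one>] by simp
lemma phi_inv: "x \<in> carrier G \<Longrightarrow> \<phi> (inv x) = \<phi> x"
proof -
  assume x: "x \<in> carrier G"
  have "(\<phi> x - \<phi> (inv x)) \<union> (\<phi> (inv x) - \<phi> x) = {}"
    using phi_mult[of x "inv x"] phi_one x by simp
  thus ?thesis by blast
qed
lemma K_subgroup: "subgroup K G"
  by (rule subgroupI) (auto simp: K_def phi_mult phi_inv phi_one)

lemma linv_cancel[simp]: "a \<in> carrier G \<Longrightarrow> z \<in> carrier G \<Longrightarrow> inv a \<otimes> (a \<otimes> z) = z"
  by (simp add: m_assoc[symmetric])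
lemma rinv_cancel[simp]: "a \<in> carrier G \<Longrightarrow> z \<in> carrier G \<Longrightarrow> a \<otimes> (inv a \<otimes> z) = z"
  by (simp add: m_assoc[symmetric])
lemma K_car': "x \<in> K \<Longrightarrow> x \<in> carrier G" by (simp add: K_def)
lemma K_lcomm: "x \<in> K \<Longrightarrow> y \<in> K \<Longrightarrow> z \<in> K \<Longrightarrow> x \<otimes> (y \<otimes> z) = y \<otimes> (x \<otimes> z)"
  by (metis K_comm K_car' m_assoc)
lemma K_sq2: "x \<in> K \<Longrightarrow> y \<in> carrier G \<Longrightarrow> x \<otimes> (x \<otimes> y) = y"
  by (simp add: K_car'  m_assoc[symmetric] K_sq)

definition C where "C a x = a \<otimes> x \<otimes> inv a"
lemma C_car[simp]: "a \<in> carrier G \<Longrightarrow> x \<in> carrier G \<Longrightarrow> C a x \<in> carrier G" by (simp add: K_car'  C_def)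
lemma C_K[simp]: "a \<in> carrier G \<Longrightarrow> x \<in> K \<Longrightarrow> C a x \<in> K"
proof -
  assume a: "a \<in> carrier G" and x: "x \<in> K"
  hence x1: "\<phi> x = {}" and x2: "x \<in> carrier G" by (auto simp: K_def)
  have "\<phi> (C a x) = {}" using a x1 x2 by (simp add: K_car'  C_def phi_mult phi_inv)
  thus ?thesis using a x2 by (simp add: K_def C_def)
qed
lemma C_mult: "a \<in> carrier G \<Longrightarrow> x \<in> carrier G \<Longrightarrow> y \<in> carrier G \<Longrightarrow> C a (x \<otimes> y) = C a x \<otimes> C a y"
  by (simp add: K_car'  C_def m_assoc)
lemma C_comp: "a \<in> carrier G \<Longrightarrow> b \<in> carrier G \<Longrightarrow> x \<in> carrier G \<Longrightarrow> C a (C b x) = C (a \<otimes> b) x"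
  by (simp add: K_car'  C_def m_assoc inv_mult_group)
lemma C_one: "x \<in> carrier G \<Longrightarrow> C \<one> x = x" by (simp add: K_car'  C_def)
lemma C_Kact: "k \<in> K \<Longrightarrow> x \<in> K \<Longrightarrow> C k x = x"
proof -
  assume k: "k \<in> K" and x: "x \<in> K"
  have "C k x = x \<otimes> k \<otimes> inv k" using K_comm[OF k x] by (simp add: K_car'  C_def)
  thus ?thesis using k x by (simp add: K_car'  m_assoc)
qed
lemma C_phi: "a \<in> carrier G \<Longrightarrow> b \<in> carrier G \<Longrightarrow> \<phi> a = \<phi> b \<Longrightarrow> x \<in> K \<Longrightarrow> C a x = C b x"
proof -
  assume a: "a \<in> carrier G" and b: "b \<in> carrier G" and e: "\<phi> a = \<phi> b" and x: "x \<in> K"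
  define k where "k = inv a \<otimes> b"
  have k: "k \<in> K" using a b e by (simp add: k_def K_def phi_mult phi_inv)
  have "b = a \<otimes> k" using a b by (simp add: K_car'  k_def)
  hence "C b x = C a (C k x)" using a k x by (simp add: K_car'  C_comp)
  thus ?thesis using C_Kact k x by simp
qed

lemma K_4: "a \<in> K \<Longrightarrow> b \<in> K \<Longrightarrow> c \<in> K \<Longrightarrow> d \<in> K \<Longrightarrow> (a \<otimes> b) \<otimes> (c \<otimes> d) = (a \<otimes> c) \<otimes> (b \<otimes> d)"
proof -
  assume a: "a \<in> K" and b: "b \<in> K" and c: "c \<in> K" and d: "d \<in> K"
  have "(a \<otimes> b) \<otimes> (c \<otimes> d) = a \<otimes> (b \<otimes> (c \<otimes> d))" using a b c d by (simp add: K_car' m_assoc)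
  also have "b \<otimes> (c \<otimes> d) = c \<otimes> (b \<otimes> d)" using K_lcomm b c d by blast
  also have "a \<otimes> (c \<otimes> (b \<otimes> d)) = (a \<otimes> c) \<otimes> (b \<otimes> d)" using a b c d by (simp add: K_car' m_assoc)
  finally show ?thesis .
qed

definition E where "E i x = C (g i) x \<otimes> x"
lemma E_K[simp]: "i \<in> {1..n} \<Longrightarrow> x \<in> K \<Longrightarrow> E i x \<in> K"
  by (simp add: E_def g_car K_mult)
lemma E_mult: "i \<in> {1..n} \<Longrightarrow> x \<in> K \<Longrightarrow> y \<in> K \<Longrightarrow> E i (x \<otimes> y) = E i x \<otimes> E i y"
  using g_car[of i] by (simp add: E_def C_mult K_car' K_4)
lemma E_one: "i \<in> {1..n} \<Longrightarrow> E i \<one> = \<one>"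
  using g_car[of i] by (simp add: E_def C_def)
lemma E_same: "i \<in> {1..n} \<Longrightarrow> x \<in> K \<Longrightarrow> E i (E i x) = \<one>"
proof -
  assume i: "i \<in> {1..n}" and x: "x \<in> K"
  have gi: "g i \<in> carrier G" using i g_car by auto
  have cx: "C (g i) x \<in> K" using gi x by simp
  have "C (g i) (C (g i) x) = x" using i x gi by (simp add: K_car' C_comp g_sq C_one)
  hence "E i (E i x) = (x \<otimes> C (g i) x) \<otimes> (C (g i) x \<otimes> x)"
    using gi x cx by (simp add: E_def C_mult K_car')
  also have "C (g i) x \<otimes> x = x \<otimes> C (g i) x" using K_comm cx x by blast
  also have "(x \<otimes> C (g i) x) \<otimes> (x \<otimes> C (g i) x) = \<one>" using K_sq K_mult x cx by blast
  finally show ?thesis .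
qed
lemma E_comm: "i \<in> {1..n} \<Longrightarrow> j \<in> {1..n} \<Longrightarrow> x \<in> K \<Longrightarrow> E i (E j x) = E j (E i x)"
proof -
  assume i: "i \<in> {1..n}" and j: "j \<in> {1..n}" and x: "x \<in> K"
  have gi: "g i \<in> carrier G" and gj: "g j \<in> carrier G" using i j g_car by auto
  have "C (g i) (C (g j) x) = C (g i \<otimes> g j) x" using gi gj x by (simp add: K_car' C_comp)
  also have "\<dots> = C (g j \<otimes> g i) x" using gi gj x by (intro C_phi) (auto simp: phi_mult)
  also have "\<dots> = C (g j) (C (g i) x)" using gi gj x by (simp add: K_car' C_comp)
  finally have cc: "C (g i) (C (g j) x) = C (g j) (C (g i) x)" .
  have "E i (E j x) = (C (g i) (C (g j) x) \<otimes> C (g i) x) \<otimes> (C (g j) x \<otimes> x)"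
    using gi gj x by (simp add: E_def C_mult K_car')
  also have "\<dots> = (C (g i) (C (g j) x) \<otimes> C (g j) x) \<otimes> (C (g i) x \<otimes> x)"
    using gi gj x by (intro K_4) auto
  also have "\<dots> = E j (E i x)"
    using gi gj x by (simp add: E_def C_mult K_car' cc)
  finally show ?thesis .
qed

definition Wd where "Wd w x = foldr E w x"
lemma Wd_simps[simp]: "Wd [] x = x" "Wd (a # w) x = E a (Wd w x)" "Wd (u @ v) x = Wd u (Wd v x)"
  by (simp_all add: Wd_def)
lemma Wd_K[simp]: "set w \<subseteq> {1..n} \<Longrightarrow> x \<in> K \<Longrightarrow> Wd w x \<in> K"
  by (induction w) auto
lemma Wd_mult: "set w \<subseteq> {1..n} \<Longrightarrow> x \<in> K \<Longrightarrow> y \<in> K \<Longrightarrow> Wd w (x \<otimes> y) = Wd w x \<otimes> Wd w y"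
  by (induction w) (auto simp: E_mult)
lemma Wd_one: "set w \<subseteq> {1..n} \<Longrightarrow> Wd w \<one> = \<one>"
  by (induction w) (auto simp: E_one)
lemma Wd_remove1: "set w \<subseteq> {1..n} \<Longrightarrow> a \<in> set w \<Longrightarrow> x \<in> K \<Longrightarrow> Wd w x = E a (Wd (remove1 a w) x)"
proof (induction w)
  case Nil thus ?case by simp
next
  case (Cons b w)
  show ?case
  proof (cases "a = b")
    case True thus ?thesis by simp
  next
    case False
    hence "a \<in> set w" using Cons by simp
    hence "Wd w x = E a (Wd (remove1 a w) x)" using Cons by simp
    moreover have "set (remove1 a w) \<subseteq> {1..n}" using Cons(2) by (meson dual_order.trans set_remove1_subset set_subset_Cons)
    moreover have "a \<in> {1..n}" "b \<in> {1..n}" using Cons(2) \<open>a \<in> set w\<close> by auto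
    ultimately show ?thesis using Cons(2,4) False E_comm[of b a "Wd (remove1 a w) x"] by simp
  qed
qed
lemma Wd_mset: "set w \<subseteq> {1..n} \<Longrightarrow> mset w = mset w' \<Longrightarrow> x \<in> K \<Longrightarrow> Wd w x = Wd w' x"
proof (induction w arbitrary: w')
  case Nil thus ?case by simp
next
  case (Cons a w)
  have a: "a \<in> set w'" using Cons(3) by (metis list.set_intros(1) set_mset_mset)
  have sw': "set w' \<subseteq> {1..n}" using Cons(2,3) by (metis set_mset_mset)
  have m: "mset w' = add_mset a (mset w)" using Cons(3) by simp
  have "mset w = mset (remove1 a w')" by (simp add: mset_remove1 m)
  hence "Wd w x = Wd (remove1 a w') x" using Cons by simp
  thus ?case using Wd_remove1[OF sw' a Cons(4)] by simp
qed
lemma nondistinct_ex: "\<not> distinct w \<Longrightarrow> \<exists>a \<in> set w. a \<in> set (remove1 a w)"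
proof (induction w)
  case Nil thus ?case by simp
next
  case (Cons b w)
  show ?case
  proof (cases "b \<in> set w")
    case True thus ?thesis by auto
  next
    case False
    then obtain a where "a \<in> set w" "a \<in> set (remove1 a w)" using Cons by auto
    thus ?thesis using False by (metis list.set_intros(2) remove1.simps(2) set_ConsD)
  qed
qed
lemma Wd_dup: "set w \<subseteq> {1..n} \<Longrightarrow> \<not> distinct w \<Longrightarrow> x \<in> K \<Longrightarrow> Wd w x = \<one>"
proof -
  assume w: "set w \<subseteq> {1..n}" and d: "\<not> distinct w" and x: "x \<in> K"
  obtain a where a: "a \<in> set w" "a \<in> set (remove1 a w)" using nondistinct_ex d by blast
  have w1: "set (remove1 a w) \<subseteq> {1..n}" using w by (meson dual_order.trans set_remove1_subset)
  have w2: "set (remove1 a (remove1 a w)) \<subseteq> {1..n}" using w1 by (meson dual_order.trans set_remove1_subset)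
  have ai: "a \<in> {1..n}" using a w by auto
  have "Wd w x = E a (E a (Wd (remove1 a (remove1 a w)) x))"
    using Wd_remove1[OF w a(1) x] Wd_remove1[OF w1 a(2) x] by simp
  thus ?thesis using E_same[OF ai] w2 x by simp
qed
lemma Wd_long: "set w \<subseteq> {1..n} \<Longrightarrow> length w > n \<Longrightarrow> x \<in> K \<Longrightarrow> Wd w x = \<one>"
proof -
  assume w: "set w \<subseteq> {1..n}" and l: "length w > n" and x: "x \<in> K"
  have "card (set w) \<le> n" using card_mono[OF _ w] by simp
  hence "\<not> distinct w" using l distinct_card by fastforce
  thus ?thesis using Wd_dup w x by blast
qed

definition cm where "cm a b = a \<otimes> b \<otimes> inv a \<otimes> inv b"
definition c where "c i j = g i \<otimes> g j \<otimes> g i \<otimes> g j"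
lemma cm_car[simp]: "a \<in> carrier G \<Longrightarrow> b \<in> carrier G \<Longrightarrow> cm a b \<in> carrier G" by (simp add: cm_def)
lemma cm_g: "i \<in> {1..n} \<Longrightarrow> j \<in> {1..n} \<Longrightarrow> cm (g i) (g j) = c i j"
  by (simp add: cm_def c_def g_inv)
lemma cm_mult2: "x \<in> carrier G \<Longrightarrow> y \<in> carrier G \<Longrightarrow> z \<in> carrier G \<Longrightarrow>
   cm x (y \<otimes> z) = cm x y \<otimes> C y (cm x z)"
  by (simp add: cm_def C_def m_assoc inv_mult_group)
lemma cm_mult1: "x \<in> carrier G \<Longrightarrow> y \<in> carrier G \<Longrightarrow> z \<in> carrier G \<Longrightarrow>
   cm (x \<otimes> y) z = C x (cm y z) \<otimes> cm x z"
  by (simp add: cm_def C_def m_assoc inv_mult_group)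
lemma g_sq2: "i \<in> {1..n} \<Longrightarrow> y \<in> carrier G \<Longrightarrow> g i \<otimes> (g i \<otimes> y) = y"
  using g_car[of i] g_sq[of i] by (simp add: m_assoc[symmetric])
lemma sq_c: "i \<in> {1..n} \<Longrightarrow> j \<in> {1..n} \<Longrightarrow> (g i \<otimes> g j) \<otimes> (g i \<otimes> g j) = c i j"
  by (simp add: c_def g_car m_assoc)
lemma c_car[simp]: "i \<in> {1..n} \<Longrightarrow> j \<in> {1..n} \<Longrightarrow> c i j \<in> carrier G"
  by (simp add: c_def g_car)
lemma c_K[simp]: "i \<in> {1..n} \<Longrightarrow> j \<in> {1..n} \<Longrightarrow> c i j \<in> K"
proof -
  assume i: "i \<in> {1..n}" and j: "j \<in> {1..n}"
  have "\<phi> (c i j) = {}" using i j by (simp add: c_def g_car phi_mult g_phi) blast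
  thus ?thesis using i j by (simp add: K_def)
qed
lemma c_sym: "i \<in> {1..n} \<Longrightarrow> j \<in> {1..n} \<Longrightarrow> c j i = c i j"
proof -
  assume i: "i \<in> {1..n}" and j: "j \<in> {1..n}"
  have "inv (c i j) = c j i" using i j by (simp add: c_def g_car inv_mult_group g_inv m_assoc)
  thus ?thesis using K_inv[OF c_K[OF i j]] by simp
qed
lemma C_c: "i \<in> {1..n} \<Longrightarrow> j \<in> {1..n} \<Longrightarrow> C (g i) (c i j) = c i j"
proof -
  assume i: "i \<in> {1..n}" and j: "j \<in> {1..n}"
  have "C (g i) (c i j) = c j i" using i j by (simp add: c_def C_def g_car g_inv m_assoc g_sq2)
  thus ?thesis using c_sym i j by simp
qed
lemma E_c: "i \<in> {1..n} \<Longrightarrow> j \<in> {1..n} \<Longrightarrow> E i (c i j) = \<one>"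
  by (simp add: E_def C_c K_sq)
lemma E_c2: "i \<in> {1..n} \<Longrightarrow> j \<in> {1..n} \<Longrightarrow> E j (c i j) = \<one>"
  using E_c c_sym by metis
lemma C_E: "i \<in> {1..n} \<Longrightarrow> x \<in> K \<Longrightarrow> C (g i) x = E i x \<otimes> x"
  using g_car[of i] by (simp add: E_def m_assoc K_sq K_car')
lemma CC: "i \<in> {1..n} \<Longrightarrow> j \<in> {1..n} \<Longrightarrow> x \<in> K \<Longrightarrow> C (g i) (C (g j) x) = C (g j) (C (g i) x)"
proof -
  assume i: "i \<in> {1..n}" and j: "j \<in> {1..n}" and x: "x \<in> K"
  have gi: "g i \<in> carrier G" and gj: "g j \<in> carrier G" using i j g_car by auto
  have "C (g i) (C (g j) x) = C (g i \<otimes> g j) x" using gi gj x by (simp add: K_car' C_comp)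
  also have "\<dots> = C (g j \<otimes> g i) x" using gi gj x by (intro C_phi) (auto simp: phi_mult)
  also have "\<dots> = C (g j) (C (g i) x)" using gi gj x by (simp add: K_car' C_comp)
  finally show ?thesis .
qed

lemma sq_g: "i \<in> {1..n} \<Longrightarrow> y \<in> carrier G \<Longrightarrow> (g i \<otimes> y) \<otimes> (g i \<otimes> y) = cm (g i) y \<otimes> (y \<otimes> y)"
  using g_car[of i] by (simp add: cm_def g_inv m_assoc)

lemma jacobi:
  assumes i: "i \<in> {1..n}" and j: "j \<in> {1..n}" and k: "k \<in> {1..n}"
  shows "E k (c i j) = E j (c i k) \<otimes> E i (c j k)"
proof -
  have gi: "g i \<in> carrier G" and gj: "g j \<in> carrier G" and gk: "g k \<in> carrier G" using i j k g_car by auto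
  define w1 where "w1 = g i \<otimes> (g j \<otimes> g k)"
  define w2 where "w2 = g j \<otimes> (g k \<otimes> g i)"
  have s1: "w1 \<otimes> w1 = c i j \<otimes> C (g j) (c i k) \<otimes> c j k"
  proof -
    have "w1 \<otimes> w1 = cm (g i) (g j \<otimes> g k) \<otimes> ((g j \<otimes> g k) \<otimes> (g j \<otimes> g k))"
      unfolding w1_def using sq_g[OF i] gj gk by simp
    also have "\<dots> = c i j \<otimes> C (g j) (c i k) \<otimes> c j k"
      using i j k gi gj gk by (simp add: cm_mult2 cm_g sq_c)
    finally show ?thesis .
  qed
  have s2: "w2 \<otimes> w2 = c j k \<otimes> C (g k) (c j i) \<otimes> c k i"
  proof -
    have "w2 \<otimes> w2 = cm (g j) (g k \<otimes> g i) \<otimes> ((g k \<otimes> g i) \<otimes> (g k \<otimes> g i))"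
      unfolding w2_def using sq_g[OF j] gk gi by simp
    also have "\<dots> = c j k \<otimes> C (g k) (c j i) \<otimes> c k i"
      using i j k gi gj gk by (simp add: cm_mult2 cm_g sq_c)
    finally show ?thesis .
  qed
  have s12: "w1 \<otimes> w1 = C (g i) (w2 \<otimes> w2)"
    unfolding w1_def w2_def C_def using gi gj gk g_sq[OF i] by (simp add: m_assoc g_inv)
  have Kf: "c i j \<in> K" "c i k \<in> K" "c j k \<in> K" "E j (c i k) \<in> K" "E i (c j k) \<in> K" "E k (c i j) \<in> K"
    using i j k by auto
  have eq: "c i j \<otimes> (E j (c i k) \<otimes> c i k) \<otimes> c j k =
            (E i (c j k) \<otimes> c j k) \<otimes> (E k (c i j) \<otimes> c i j) \<otimes> c i k"
  proof -
    have "c i j \<otimes> (E j (c i k) \<otimes> c i k) \<otimes> c j k = C (g i) (c j k \<otimes> C (g k) (c i j) \<otimes> c i k)"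
      using s1 s2 s12 c_sym i j k by (simp add: C_E)
    also have "\<dots> = C (g i) (c j k) \<otimes> C (g i) (C (g k) (c i j)) \<otimes> C (g i) (c i k)"
      using i j k gi gk by (simp add: C_mult K_car')
    also have "\<dots> = (E i (c j k) \<otimes> c j k) \<otimes> (E k (c i j) \<otimes> c i j) \<otimes> c i k"
    proof -
      have "C (g i) (C (g k) (c i j)) = C (g k) (C (g i) (c i j))" using i j k CC[of i k "c i j"] by simp
      also have "\<dots> = C (g k) (c i j)" using i j by (simp add: C_c)
      also have "\<dots> = E k (c i j) \<otimes> c i j" using i j k by (simp add: C_E)
      finally have 1: "C (g i) (C (g k) (c i j)) = E k (c i j) \<otimes> c i j" .
      have 2: "C (g i) (c i k) = c i k" using i k by (simp add: C_c)
      have 3: "C (g i) (c j k) = E i (c j k) \<otimes> c j k" using i j k by (simp add: C_E)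
      show ?thesis by (simp only: 1 2 3)
    qed
    finally show ?thesis .
  qed
  define L where "L = c i j \<otimes> (E j (c i k) \<otimes> c i k) \<otimes> c j k"
  define R where "R = (E i (c j k) \<otimes> c j k) \<otimes> (E k (c i j) \<otimes> c i j) \<otimes> c i k"
  have LK: "L \<in> K" and RK: "R \<in> K" using Kf by (simp_all add: L_def R_def K_mult)
  have "E k (c i j) = E k (c i j) \<otimes> (R \<otimes> R)" using RK Kf by (simp add: K_sq K_car')
  also have "\<dots> = E k (c i j) \<otimes> (L \<otimes> R)" using eq by (simp add: L_def R_def)
  also have "\<dots> = E j (c i k) \<otimes> E i (c j k)"
    unfolding L_def R_def using Kf by (simp add: m_assoc K_comm K_lcomm K_sq2 K_sq K_mult K_car')
  finally show ?thesis .
qed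

lemma gen_ind:
  assumes x: "x \<in> generate G Y" and invY: "\<And>y. y \<in> Y \<Longrightarrow> inv y \<in> Y"
    and P1: "P \<one>" and Pb: "\<And>y. y \<in> Y \<Longrightarrow> P y"
    and Ps: "\<And>y z. y \<in> generate G Y \<Longrightarrow> z \<in> generate G Y \<Longrightarrow> P y \<Longrightarrow> P z \<Longrightarrow> P (y \<otimes> z)"
  shows "P x"
  using x
proof (induction rule: generate.induct)
  case one thus ?case using P1 by simp
next
  case (incl h) thus ?case using Pb by simp
next
  case (inv h) thus ?case using Pb invY by simp
next
  case (eng h1 h2) thus ?case using Ps by simp
qed

definition X0 where "X0 = g ` {1..n} \<union> K"
lemma X0_inv: "y \<in> X0 \<Longrightarrow> inv y \<in> X0"
  by (auto simp: X0_def g_inv K_inv)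
lemma X0_car: "X0 \<subseteq> carrier G" by (auto simp: X0_def g_car K_car')

fun hl where "hl [] = \<one>" | "hl (i # w) = g i \<otimes> hl w"
lemma hl_car: "set w \<subseteq> {1..n} \<Longrightarrow> hl w \<in> carrier G"
  by (induction w) (auto simp: g_car)
lemma hl_phi: "set w \<subseteq> {1..n} \<Longrightarrow> distinct w \<Longrightarrow> \<phi> (hl w) = set w"
  by (induction w) (auto simp: g_car phi_one phi_mult hl_car g_phi)
lemma hl_gen: "set w \<subseteq> {1..n} \<Longrightarrow> hl w \<in> generate G (g ` {1..n})"
proof (induction w)
  case Nil thus ?case by (simp add: generate.one)
next
  case (Cons i w)
  have "g i \<in> generate G (g ` {1..n})" using Cons(2) by (intro generate.incl) auto
  thus ?case using Cons generate.eng by auto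
qed
definition hS where "hS S = hl (sorted_list_of_set S)"
lemma hS_car: "S \<subseteq> {1..n} \<Longrightarrow> hS S \<in> carrier G"
  unfolding hS_def by (rule hl_car) (metis finite_atLeastAtMost rev_finite_subset set_sorted_list_of_set)
lemma hS_phi: "S \<subseteq> {1..n} \<Longrightarrow> \<phi> (hS S) = S"
proof -
  assume S: "S \<subseteq> {1..n}"
  hence f: "finite S" using finite_subset by blast
  thus ?thesis using S by (simp add: hS_def hl_phi)
qed
lemma decomp: "a \<in> carrier G \<Longrightarrow> \<exists>k\<in>K. a = hS (\<phi> a) \<otimes> k"
proof -
  assume a: "a \<in> carrier G"
  have S: "\<phi> a \<subseteq> {1..n}" using phi_sub a by simp
  have h: "hS (\<phi> a) \<in> carrier G" using hS_car S by simp
  have "inv (hS (\<phi> a)) \<otimes> a \<in> K" using a h hS_phi[OF S] by (simp add: K_def phi_mult phi_inv)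
  moreover have "a = hS (\<phi> a) \<otimes> (inv (hS (\<phi> a)) \<otimes> a)" using a h by simp
  ultimately show ?thesis by blast
qed
lemma G_gen: "carrier G \<subseteq> generate G X0"
proof
  fix a assume a: "a \<in> carrier G"
  obtain k where k: "k \<in> K" "a = hS (\<phi> a) \<otimes> k" using decomp a by blast
  have "set (sorted_list_of_set (\<phi> a)) \<subseteq> {1..n}" using phi_sub[OF a]
    by (metis finite_atLeastAtMost rev_finite_subset set_sorted_list_of_set)
  hence "hS (\<phi> a) \<in> generate G (g ` {1..n})" unfolding hS_def by (rule hl_gen)
  hence "hS (\<phi> a) \<in> generate G X0" using mono_generate[of "g ` {1..n}" X0] by (auto simp: X0_def)
  moreover have "k \<in> generate G X0" using k by (auto simp: X0_def intro: generate.incl)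
  ultimately have "hS (\<phi> a) \<otimes> k \<in> generate G X0" by (rule generate.eng)
  thus "a \<in> generate G X0" using k(2) by simp
qed
lemma G_ind:
  assumes a: "a \<in> carrier G" and one: "P \<one>" and base: "\<And>y. y \<in> X0 \<Longrightarrow> P y"
    and step: "\<And>y z. y \<in> carrier G \<Longrightarrow> z \<in> carrier G \<Longrightarrow> P y \<Longrightarrow> P z \<Longrightarrow> P (y \<otimes> z)"
  shows "P a"
proof -
  have "a \<in> generate G X0" using G_gen a by blast
  thus ?thesis
    by (rule gen_ind[where P=P]) (auto simp: X0_inv one base step generate_in_carrier[OF X0_car])
qed

lemma cm_K: "a \<in> carrier G \<Longrightarrow> x \<in> K \<Longrightarrow> cm a x = C a x \<otimes> x"
  by (simp add: cm_def C_def K_inv K_car')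
lemma cm_g_K: "i \<in> {1..n} \<Longrightarrow> x \<in> K \<Longrightarrow> cm (g i) x = E i x"
  by (simp add: cm_K E_def g_car)
lemma cm_KK: "a \<in> K \<Longrightarrow> x \<in> K \<Longrightarrow> cm a x = \<one>"
  by (simp add: cm_K K_car' C_Kact K_sq)
lemma cm_inv: "a \<in> carrier G \<Longrightarrow> b \<in> carrier G \<Longrightarrow> inv (cm a b) = cm b a"
  by (simp add: cm_def inv_mult_group m_assoc)

lemma comm_sub_cm: "comm_subgroup G A B = generate G {cm a b | a b. a \<in> A \<and> b \<in> B}"
  unfolding comm_subgroup_def cm_def by (rule refl)

lemma comm_in_N:
  assumes N: "subgroup N G" "N \<subseteq> K" and EN: "\<And>i x. i \<in> {1..n} \<Longrightarrow> x \<in> K \<Longrightarrow> E i x \<in> N"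
    and cN: "\<And>i j. i \<in> {1..n} \<Longrightarrow> j \<in> {1..n} \<Longrightarrow> c i j \<in> N"
  shows "K \<subseteq> N"
proof -
  have Nmult: "\<And>x y. x \<in> N \<Longrightarrow> y \<in> N \<Longrightarrow> x \<otimes> y \<in> N" by (rule subgroup.m_closed[OF N(1)])
  have Ninv: "\<And>x. x \<in> N \<Longrightarrow> inv x \<in> N" by (rule subgroup.m_inv_closed[OF N(1)])
  have Ncar: "\<And>x. x \<in> N \<Longrightarrow> x \<in> carrier G" by (rule subgroup.mem_carrier[OF N(1)])
  have hlN: "\<And>w z. set w \<subseteq> {1..n} \<Longrightarrow> z \<in> N \<Longrightarrow> C (hl w) z \<in> N"
  proof -
    fix w z assume w: "set w \<subseteq> {1..n}" and z: "z \<in> N"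
    thus "C (hl w) z \<in> N"
    proof (induction w)
      case Nil thus ?case using Ncar by (simp add: C_one)
    next
      case (Cons i w)
      hence i: "i \<in> {1..n}" and IH: "C (hl w) z \<in> N" and w: "set w \<subseteq> {1..n}" by auto
      have zK: "C (hl w) z \<in> K" using IH N(2) by blast
      have "C (hl (i # w)) z = C (g i) (C (hl w) z)"
        using i w z Ncar by (simp add: C_comp g_car hl_car)
      also have "\<dots> = E i (C (hl w) z) \<otimes> C (hl w) z" using C_E i zK by simp
      finally show ?case using Nmult EN[OF i zK] IH by simp
    qed
  qed
  have normal: "\<And>a z. a \<in> carrier G \<Longrightarrow> z \<in> N \<Longrightarrow> C a z \<in> N"
  proof -
    fix a z assume a: "a \<in> carrier G" and z: "z \<in> N"
    obtain k where k: "k \<in> K" "a = hS (\<phi> a) \<otimes> k" using decomp a by blast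
    have S: "set (sorted_list_of_set (\<phi> a)) \<subseteq> {1..n}" using phi_sub[OF a]
      by (metis finite_atLeastAtMost rev_finite_subset set_sorted_list_of_set)
    have "C a z = C (hS (\<phi> a)) (C k z)" using k z Ncar S hl_car
      by (simp add: C_comp hS_def K_car')
    also have "C k z = z" using C_Kact k z N(2) by blast
    finally show "C a z \<in> N" using hlN[OF S z] by (simp add: hS_def)
  qed
  have step1: "\<And>x b. x \<in> X0 \<Longrightarrow> b \<in> carrier G \<Longrightarrow> cm x b \<in> N"
  proof -
    fix x b assume x: "x \<in> X0" and b: "b \<in> carrier G"
    have xc: "x \<in> carrier G" using x X0_car by blast
    show "cm x b \<in> N"
    proof (rule G_ind[OF b, where P="\<lambda>b. cm x b \<in> N"])
      show "cm x \<one> \<in> N" using xc subgroup.one_closed[OF N(1)] by (simp add: cm_def)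
    next
      fix y assume y: "y \<in> X0"
      show "cm x y \<in> N"
      proof (cases "x \<in> K")
        case True
        show ?thesis
        proof (cases "y \<in> K")
          case True
          thus ?thesis using \<open>x \<in> K\<close> cm_KK subgroup.one_closed[OF N(1)] by simp
        next
          case False
          then obtain j where j: "j \<in> {1..n}" "y = g j" using y by (auto simp: X0_def)
          have "cm x y = inv (cm (g j) x)" using cm_inv j g_car xc by simp
          thus ?thesis using cm_g_K[OF j(1) True] EN[OF j(1) True] Ninv by simp
        qed
      next
        case False
        then obtain i where i: "i \<in> {1..n}" "x = g i" using x by (auto simp: X0_def)
        show ?thesis
        proof (cases "y \<in> K")
          case True
          thus ?thesis using i cm_g_K EN by simp
        next
          case False
          then obtain j where j: "j \<in> {1..n}" "y = g j" using y by (auto simp: X0_def)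
          thus ?thesis using i cm_g cN by simp
        qed
      qed
    next
      fix y z assume y: "y \<in> carrier G" and z: "z \<in> carrier G" and Py: "cm x y \<in> N" and Pz: "cm x z \<in> N"
      show "cm x (y \<otimes> z) \<in> N" using cm_mult2[OF xc y z] Nmult Py normal[OF y Pz] by simp
    qed
  qed
  have step2: "\<And>a b. a \<in> carrier G \<Longrightarrow> b \<in> carrier G \<Longrightarrow> cm a b \<in> N"
  proof -
    fix a b assume a: "a \<in> carrier G" and b: "b \<in> carrier G"
    show "cm a b \<in> N"
    proof (rule G_ind[OF a, where P="\<lambda>a. cm a b \<in> N"])
      show "cm \<one> b \<in> N" using b subgroup.one_closed[OF N(1)] by (simp add: cm_def)
    next
      fix y assume "y \<in> X0" thus "cm y b \<in> N" using step1 b by blast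
    next
      fix y z assume y: "y \<in> carrier G" and z: "z \<in> carrier G" and Py: "cm y b \<in> N" and Pz: "cm z b \<in> N"
      show "cm (y \<otimes> z) b \<in> N" using cm_mult1[OF y z b] Nmult Py normal[OF y Pz] by simp
    qed
  qed
  have "{cm a b | a b. a \<in> carrier G \<and> b \<in> carrier G} \<subseteq> N" using step2 by blast
  hence "generate G {cm a b | a b. a \<in> carrier G \<and> b \<in> carrier G} \<subseteq> N"
    by (rule generate_subgroup_incl[OF _ N(1)])
  thus ?thesis using comm_eq by (simp only: comm_sub_cm)
qed

definition Eimg where "Eimg S = {E i x | i x. i \<in> {1..n} \<and> x \<in> S}"
fun M where "M 0 = K" | "M (Suc j) = generate G (Eimg (M j))"
definition B0 where "B0 = {Wd w (c i j) | w i j. set w \<subseteq> {1..n} \<and> i \<in> {1..n} \<and> j \<in> {1..n}}"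
definition Q where "Q j = {x \<in> K. \<forall>w. set w \<subseteq> {1..n} \<and> n < length w + j \<longrightarrow> Wd w x = \<one>}"

lemma gen_K: "S \<subseteq> K \<Longrightarrow> generate G S \<subseteq> K"
  by (rule generate_subgroup_incl[OF _ K_subgroup])
lemma B0_K: "B0 \<subseteq> K" by (auto simp: B0_def)
lemma Eimg_K: "S \<subseteq> K \<Longrightarrow> Eimg S \<subseteq> K" by (auto simp: Eimg_def)
lemma M_K: "M j \<subseteq> K"
  by (induction j) (auto intro!: gen_K Eimg_K)
lemma M_car: "M j \<subseteq> carrier G" using M_K K_car' by blast
lemma B0_car: "B0 \<subseteq> carrier G" using B0_K K_car' by blast
lemma gen_E:
  assumes S: "S \<subseteq> K" and x: "x \<in> generate G S" and i: "i \<in> {1..n}"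
  shows "E i x \<in> generate G (Eimg S)"
  using x
proof (induction rule: generate.induct)
  case one thus ?case using i by (simp add: E_one generate.one)
next
  case (incl h) thus ?case using i by (auto simp: Eimg_def intro!: generate.incl)
next
  case (inv h)
  hence "inv h = h" using S K_inv by blast
  thus ?case using inv i by (auto simp: Eimg_def intro!: generate.incl)
next
  case (eng h1 h2)
  have "h1 \<in> K" "h2 \<in> K" using eng(1,2) gen_K[OF S] by auto
  hence "E i (h1 \<otimes> h2) = E i h1 \<otimes> E i h2" using E_mult i by blast
  thus ?case using eng generate.eng by simp
qed
lemma EB0: "Eimg B0 \<subseteq> B0"
proof
  fix y assume "y \<in> Eimg B0"
  then obtain i w a b where "i \<in> {1..n}" "set w \<subseteq> {1..n}" "a \<in> {1..n}" "b \<in> {1..n}" "y = E i (Wd w (c a b))"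
    by (auto simp: Eimg_def B0_def)
  hence "y = Wd (i # w) (c a b)" "set (i # w) \<subseteq> {1..n}" by auto
  thus "y \<in> B0" using \<open>a \<in> _\<close> \<open>b \<in> _\<close> unfolding B0_def by blast
qed
lemma c_B0: "i \<in> {1..n} \<Longrightarrow> j \<in> {1..n} \<Longrightarrow> c i j \<in> B0"
  unfolding B0_def by (rule CollectI, rule exI[of _ "[]"]) auto
lemma M_step: "M j \<subseteq> generate G (B0 \<union> M (Suc j))"
proof (induction j)
  case 0
  have "K \<subseteq> generate G (B0 \<union> M (Suc 0))"
  proof (rule comm_in_N)
    show "subgroup (generate G (B0 \<union> M (Suc 0))) G"
      using B0_car M_car[of 1] by (intro generate_is_subgroup) auto
    show "generate G (B0 \<union> M (Suc 0)) \<subseteq> K" using B0_K M_K[of 1] by (intro gen_K) auto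
    show "\<And>i x. i \<in> {1..n} \<Longrightarrow> x \<in> K \<Longrightarrow> E i x \<in> generate G (B0 \<union> M (Suc 0))"
    proof -
      fix i x assume "i \<in> {1..n}" "x \<in> K"
      hence "E i x \<in> M (Suc 0)" by (auto simp: Eimg_def intro!: generate.incl)
      thus "E i x \<in> generate G (B0 \<union> M (Suc 0))" by (auto intro: generate.incl)
    qed
    show "\<And>i j. i \<in> {1..n} \<Longrightarrow> j \<in> {1..n} \<Longrightarrow> c i j \<in> generate G (B0 \<union> M (Suc 0))"
      using c_B0 by (auto intro: generate.incl)
  qed
  thus ?case by simp
next
  case (Suc j)
  have "Eimg (M j) \<subseteq> generate G (B0 \<union> M (Suc (Suc j)))"
  proof
    fix y assume "y \<in> Eimg (M j)"
    then obtain i x where ix: "i \<in> {1..n}" "x \<in> M j" "y = E i x" by (auto simp: Eimg_def)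
    have S: "B0 \<union> M (Suc j) \<subseteq> K" using B0_K M_K[of "Suc j"] by blast
    have "y \<in> generate G (Eimg (B0 \<union> M (Suc j)))" using gen_E[OF S _ ix(1)] Suc ix by blast
    moreover have "Eimg (B0 \<union> M (Suc j)) \<subseteq> B0 \<union> M (Suc (Suc j))"
      using EB0 by (auto simp: Eimg_def intro!: generate.incl)
    ultimately show "y \<in> generate G (B0 \<union> M (Suc (Suc j)))" using mono_generate by blast
  qed
  hence "generate G (Eimg (M j)) \<subseteq> generate G (B0 \<union> M (Suc (Suc j)))"
    using B0_car M_car[of "Suc (Suc j)"] by (intro generate_subgroup_incl generate_is_subgroup) auto
  thus ?case by simp
qed
lemma K_sub_j: "K \<subseteq> generate G (B0 \<union> M j)"
proof (induction j)
  case 0 thus ?case by (auto intro: generate.incl)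
next
  case (Suc j)
  have "B0 \<union> M j \<subseteq> generate G (B0 \<union> M (Suc j))" using M_step by (auto intro: generate.incl)
  hence "generate G (B0 \<union> M j) \<subseteq> generate G (B0 \<union> M (Suc j))"
    using B0_car M_car[of "Suc j"] by (intro generate_subgroup_incl generate_is_subgroup) auto
  thus ?case using Suc by blast
qed
lemma Q_subgroup: "subgroup (Q j) G"
proof (rule subgroupI)
  show "Q j \<subseteq> carrier G" by (auto simp: Q_def K_car')
  show "Q j \<noteq> {}" using K_one Wd_one by (auto simp: Q_def)
  show "\<And>a. a \<in> Q j \<Longrightarrow> inv a \<in> Q j" by (auto simp: Q_def K_inv)
  show "\<And>a b. a \<in> Q j \<Longrightarrow> b \<in> Q j \<Longrightarrow> a \<otimes> b \<in> Q j"
    by (auto simp: Q_def K_mult Wd_mult)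
qed
lemma Q0: "Q 0 = K" using Wd_long by (auto simp: Q_def)
lemma Q_top: "Q (Suc n) \<subseteq> {\<one>}"
proof
  fix x assume "x \<in> Q (Suc n)"
  hence "\<forall>w. set w \<subseteq> {1..n} \<and> n < length w + Suc n \<longrightarrow> Wd w x = \<one>" unfolding Q_def by blast
  hence "Wd [] x = \<one>" by (metis empty_subsetI empty_set lessI list.size(3) add_0)
  thus "x \<in> {\<one>}" by simp
qed
lemma Q_mono: "Q (Suc j) \<subseteq> Q j" by (auto simp: Q_def)
lemma E_Q: "i \<in> {1..n} \<Longrightarrow> x \<in> Q j \<Longrightarrow> E i x \<in> Q (Suc j)"
proof -
  assume i: "i \<in> {1..n}" and x: "x \<in> Q j"
  have xK: "x \<in> K" using x by (simp add: Q_def)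
  have "\<And>w. set w \<subseteq> {1..n} \<Longrightarrow> n < length w + Suc j \<Longrightarrow> Wd w (E i x) = \<one>"
  proof -
    fix w assume w: "set w \<subseteq> {1..n}" "n < length w + Suc j"
    have A: "\<forall>w. set w \<subseteq> {1..n} \<and> n < length w + j \<longrightarrow> Wd w x = \<one>" using x by (simp add: Q_def)
    have "Wd (w @ [i]) x = \<one>" using A[rule_format, of "w @ [i]"] w i by simp
    thus "Wd w (E i x) = \<one>" by simp
  qed
  thus ?thesis using i xK by (simp add: Q_def)
qed
lemma M_Q: "M j \<subseteq> Q j"
proof (induction j)
  case 0 thus ?case using Q0 by simp
next
  case (Suc j)
  have "Eimg (M j) \<subseteq> Q (Suc j)" using Suc E_Q by (auto simp: Eimg_def)
  thus ?case by (simp add: generate_subgroup_incl[OF _ Q_subgroup])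
qed
lemma K_B0: "K \<subseteq> generate G B0"
proof -
  have "M (Suc n) \<subseteq> {\<one>}" using M_Q Q_top by blast
  hence "B0 \<union> M (Suc n) \<subseteq> generate G B0" by (auto intro: generate.incl generate.one)
  hence "generate G (B0 \<union> M (Suc n)) \<subseteq> generate G B0"
    using B0_car by (intro generate_subgroup_incl generate_is_subgroup) auto
  thus ?thesis using K_sub_j[of "Suc n"] by blast
qed

lemma cm_Q: "a \<in> carrier G \<Longrightarrow> \<forall>j. \<forall>x\<in>Q j. cm a x \<in> Q (Suc j)"
proof (erule G_ind)
  have "\<And>x. x \<in> carrier G \<Longrightarrow> cm \<one> x = \<one>" by (simp add: cm_def)
  thus "\<forall>j. \<forall>x\<in>Q j. cm \<one> x \<in> Q (Suc j)"
    using subgroup.one_closed[OF Q_subgroup] by (auto simp: Q_def K_car' Wd_one)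
next
  fix y assume y: "y \<in> X0"
  show "\<forall>j. \<forall>x\<in>Q j. cm y x \<in> Q (Suc j)"
  proof (cases "y \<in> K")
    case True
    thus ?thesis using cm_KK subgroup.one_closed[OF Q_subgroup] by (auto simp: Q_def Wd_one)
  next
    case False
    then obtain i where i: "i \<in> {1..n}" "y = g i" using y by (auto simp: X0_def)
    show ?thesis using i cm_g_K E_Q by (auto simp: Q_def)
  qed
next
  fix y z assume y: "y \<in> carrier G" and z: "z \<in> carrier G"
    and Py: "\<forall>j. \<forall>x\<in>Q j. cm y x \<in> Q (Suc j)" and Pz: "\<forall>j. \<forall>x\<in>Q j. cm z x \<in> Q (Suc j)"
  show "\<forall>j. \<forall>x\<in>Q j. cm (y \<otimes> z) x \<in> Q (Suc j)"
  proof (intro allI ballI)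
    fix j x assume x: "x \<in> Q j"
    have xK: "x \<in> K" using x by (simp add: Q_def)
    have u: "cm z x \<in> Q (Suc j)" using Pz x by blast
    have uK: "cm z x \<in> K" using u by (simp add: Q_def)
    have "C y (cm z x) = cm y (cm z x) \<otimes> cm z x"
      using cm_K[OF y uK] y uK by (simp add: m_assoc K_sq K_car')
    moreover have "cm y (cm z x) \<in> Q (Suc j)" using Py u Q_mono by blast
    ultimately have "C y (cm z x) \<in> Q (Suc j)" using u subgroup.m_closed[OF Q_subgroup] by simp
    moreover have "cm y x \<in> Q (Suc j)" using Py x by blast
    ultimately show "cm (y \<otimes> z) x \<in> Q (Suc j)"
      using cm_mult1[OF y z] xK subgroup.m_closed[OF Q_subgroup] by (simp add: K_car')
  qed
qed

lemma lcs_Q: "lcs G (Suc m) \<subseteq> Q m"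
proof (induction m)
  case 0 thus ?case using comm_eq Q0 by simp
next
  case (Suc m)
  have "{cm a b | a b. a \<in> carrier G \<and> b \<in> lcs G (Suc m)} \<subseteq> Q (Suc m)"
    using cm_Q Suc by blast
  hence "generate G {cm a b | a b. a \<in> carrier G \<and> b \<in> lcs G (Suc m)} \<subseteq> Q (Suc m)"
    by (rule generate_subgroup_incl[OF _ Q_subgroup])
  thus ?case by (simp add: comm_sub_cm)
qed
lemma lcs_triv: "lcs G (Suc (Suc n)) = {\<one>}"
proof
  show "lcs G (Suc (Suc n)) \<subseteq> {\<one>}" using lcs_Q[of "Suc n"] Q_top by blast
  show "{\<one>} \<subseteq> lcs G (Suc (Suc n))" by (simp add: comm_sub_cm generate.one)
qed

definition Idx where "Idx = Sigma (Pow {1..n}) (\<lambda>T. T - {Min T})"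
definition bf where "bf p = Wd (sorted_list_of_set (fst p - {Min (fst p), snd p})) (c (Min (fst p)) (snd p))"
definition Bset where "Bset = bf ` Idx"

lemma Wd_pull: "set w \<subseteq> {1..n} \<Longrightarrow> a \<in> set w \<Longrightarrow> x \<in> K \<Longrightarrow> Wd w x = Wd (remove1 a w) (E a x)"
proof -
  assume w: "set w \<subseteq> {1..n}" and a: "a \<in> set w" and x: "x \<in> K"
  have "mset w = mset (remove1 a w @ [a])" using a by simp
  hence "Wd w x = Wd (remove1 a w @ [a]) x" using Wd_mset w x by blast
  thus ?thesis by simp
qed

lemma inB:
  assumes u: "distinct u" "set u \<subseteq> {1..n}" and i: "i \<in> {1..n}" and j: "j \<in> {1..n}"
    and ij: "i < j" and iu: "\<forall>x\<in>set u. i < x" and ju: "j \<notin> set u"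
  shows "Wd u (c i j) \<in> Bset"
proof -
  define T where "T = insert i (insert j (set u))"
  have fT: "finite T" by (simp add: T_def)
  have mT: "Min T = i" unfolding T_def using iu ij by (intro Min_eqI) auto
  have TI: "(T, j) \<in> Idx" using mT i j u ij by (auto simp: Idx_def T_def)
  have TS: "T - {i, j} = set u" using iu ij ju by (auto simp: T_def)
  have "mset (sorted_list_of_set (set u)) = mset u"
    using mset_set_set[of "sorted_list_of_set (set u)"] mset_set_set[OF u(1)] by simp
  hence "Wd (sorted_list_of_set (set u)) (c i j) = Wd u (c i j)"
    using Wd_mset[of "sorted_list_of_set (set u)" u "c i j"] u i j by simp
  hence "bf (T, j) = Wd u (c i j)" using mT TS by (simp add: bf_def)
  thus ?thesis using TI unfolding Bset_def by (metis image_eqI)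
qed

lemma c_ii: "i \<in> {1..n} \<Longrightarrow> c i i = \<one>"
  by (simp add: c_def g_sq g_car)

lemma B0_sub: "B0 \<subseteq> generate G Bset"
proof
  fix y assume "y \<in> B0"
  then obtain w i j where w: "set w \<subseteq> {1..n}" and i: "i \<in> {1..n}" and j: "j \<in> {1..n}" and y: "y = Wd w (c i j)"
    by (auto simp: B0_def)
  have cK: "c i j \<in> K" using i j by simp
  show "y \<in> generate G Bset"
  proof (cases "distinct w \<and> i \<noteq> j \<and> i \<notin> set w \<and> j \<notin> set w")
    case False
    have "y = \<one>"
    proof (cases "distinct w")
      case False thus ?thesis using Wd_dup w cK y by simp
    next
      case True
      show ?thesis
      proof (cases "i = j")
        case True thus ?thesis using y c_ii i Wd_one w by simp
      next
        case ne: False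
        show ?thesis
        proof (cases "i \<in> set w")
          case True
          hence "y = Wd (remove1 i w) (E i (c i j))" using Wd_pull w cK y by simp
          moreover have "set (remove1 i w) \<subseteq> {1..n}" using w by (meson order.trans set_remove1_subset)
          ultimately show ?thesis using E_c i j Wd_one by simp
        next
          case False
          hence "j \<in> set w" using \<open>\<not> (distinct w \<and> i \<noteq> j \<and> i \<notin> set w \<and> j \<notin> set w)\<close> True ne by blast
          hence "y = Wd (remove1 j w) (E j (c i j))" using Wd_pull w cK y by simp
          moreover have "set (remove1 j w) \<subseteq> {1..n}" using w by (meson order.trans set_remove1_subset)
          ultimately show ?thesis using E_c2 i j Wd_one by simp
        qed
      qed
    qed
    thus ?thesis by (simp add: generate.one)
  next
    case True
    hence d: "distinct w" and ij: "i \<noteq> j" and iw: "i \<notin> set w" and jw: "j \<notin> set w" by auto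
    define T where "T = insert i (insert j (set w))"
    have fT: "finite T" "T \<noteq> {}" by (auto simp: T_def)
    define m where "m = Min T"
    have mT: "m \<in> T" using fT by (simp add: m_def)
    have mle: "\<And>x. x \<in> T \<Longrightarrow> m \<le> x" using fT by (simp add: m_def)
    show ?thesis
    proof (cases "m = i")
      case True
      have "y \<in> Bset" unfolding y
      proof (rule inB[OF d w i j])
        show "i < j" using mle[of j] True ij by (auto simp: T_def)
        show "\<forall>x\<in>set w. i < x"
        proof
          fix x assume x: "x \<in> set w"
          hence "i \<le> x" using mle[of x] True by (simp add: T_def)
          moreover have "x \<noteq> i" using x iw by blast
          ultimately show "i < x" by simp
        qed
      qed (rule jw)
      thus ?thesis by (rule generate.incl)
    next
      case mi: False
      show ?thesis
      proof (cases "m = j")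
        case True
        have "Wd w (c j i) \<in> Bset"
        proof (rule inB[OF d w j i])
          show "j < i" using mle[of i] True ij by (auto simp: T_def)
          show "\<forall>x\<in>set w. j < x"
          proof
            fix x assume x: "x \<in> set w"
            hence "j \<le> x" using mle[of x] True by (simp add: T_def)
            moreover have "x \<noteq> j" using x jw by blast
            ultimately show "j < x" by simp
          qed
        qed (rule iw)
        thus ?thesis using c_sym i j y by (simp add: generate.incl)
      next
        case mj: False
        hence mw: "m \<in> set w" using mT mi by (auto simp: T_def)
        have mn: "m \<in> {1..n}" using mw w by auto
        define w' where "w' = remove1 m w"
        have w'1: "set w' = set w - {m}" "distinct w'" using d by (simp_all add: w'_def)
        have w'2: "set w' \<subseteq> {1..n}" using w'1 w by auto
        have "y = Wd w' (E m (c i j))" using Wd_pull[OF w mw cK] y by (simp add: w'_def)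
        also have "\<dots> = Wd w' (E j (c i m) \<otimes> E i (c j m))" using jacobi[OF i j mn] by simp
        also have "\<dots> = Wd w' (E j (c i m)) \<otimes> Wd w' (E i (c j m))" using Wd_mult w'2 i j mn by simp
        also have "\<dots> = Wd (w' @ [j]) (c m i) \<otimes> Wd (w' @ [i]) (c m j)" using c_sym i j mn by simp
        finally have y2: "y = Wd (w' @ [j]) (c m i) \<otimes> Wd (w' @ [i]) (c m j)" .
        have lt: "\<And>x. x \<in> T \<Longrightarrow> x \<noteq> m \<Longrightarrow> m < x" using mle le_neq_implies_less by blast
        have b1: "Wd (w' @ [j]) (c m i) \<in> Bset"
        proof (rule inB)
          show "distinct (w' @ [j])" using w'1 jw by simp
          show "set (w' @ [j]) \<subseteq> {1..n}" using w'2 j by simp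
          show "m < i" using lt[of i] mi by (simp add: T_def)
          show "\<forall>x\<in>set (w' @ [j]). m < x" using lt w'1 mj by (auto simp: T_def)
          show "i \<notin> set (w' @ [j])" using w'1 iw ij by auto
        qed (rule mn i j)+
        have b2: "Wd (w' @ [i]) (c m j) \<in> Bset"
        proof (rule inB)
          show "distinct (w' @ [i])" using w'1 iw by simp
          show "set (w' @ [i]) \<subseteq> {1..n}" using w'2 i by simp
          show "m < j" using lt[of j] mj by (simp add: T_def)
          show "\<forall>x\<in>set (w' @ [i]). m < x" using lt w'1 mi by (auto simp: T_def)
          show "j \<notin> set (w' @ [i])" using w'1 jw ij by auto
        qed (rule mn i j)+
        show ?thesis using y2 b1 b2 by (simp add: generate.incl generate.eng)
      qed
    qed
  qed
qed

lemma Bset_K: "Bset \<subseteq> K"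
proof
  fix y assume "y \<in> Bset"
  then obtain T j where Tj: "(T, j) \<in> Idx" "y = bf (T, j)" by (auto simp: Bset_def)
  hence T: "T \<subseteq> {1..n}" "j \<in> T" by (auto simp: Idx_def)
  hence fT: "finite T" using finite_subset by blast
  hence "Min T \<in> T" using T Min_in by blast
  hence mn: "Min T \<in> {1..n}" using T by blast
  have st: "set (sorted_list_of_set (T - {Min T, j})) \<subseteq> {1..n}" using fT T by auto
  have jn: "j \<in> {1..n}" using T by blast
  show "y \<in> K" using Wd_K[OF st c_K[OF mn jn]] Tj(2) by (simp add: bf_def)
qed

lemma K_Bset: "K \<subseteq> generate G Bset"
proof -
  have "generate G B0 \<subseteq> generate G Bset"
    using B0_sub Bset_K K_car' by (intro generate_subgroup_incl generate_is_subgroup) auto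
  thus ?thesis using K_B0 by blast
qed

lemma gen_insert:
  assumes S: "S \<subseteq> K" and b: "b \<in> K"
  shows "generate G (insert b S) \<subseteq> generate G S \<union> (\<lambda>x. b \<otimes> x) ` generate G S"
proof
  fix x assume "x \<in> generate G (insert b S)"
  thus "x \<in> generate G S \<union> (\<lambda>x. b \<otimes> x) ` generate G S"
  proof (induction rule: generate.induct)
    case one thus ?case by (simp add: generate.one)
  next
    case (incl h)
    show ?case
    proof (cases "h = b")
      case True
      hence "h = b \<otimes> \<one>" using b by (simp add: K_car')
      thus ?thesis by (auto intro: generate.one)
    next
      case False thus ?thesis using incl by (auto intro: generate.incl)
    qed
  next
    case (inv h)
    have "inv h = h" using inv S b K_inv by auto
    show ?case
    proof (cases "h = b")
      case True
      hence "inv h = b \<otimes> \<one>" using b \<open>inv h = h\<close> by (simp add: K_car')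
      thus ?thesis by (auto intro: generate.one)
    next
      case False thus ?thesis using inv \<open>inv h = h\<close> by (auto intro: generate.incl)
    qed
  next
    case (eng h1 h2)
    have gK: "generate G S \<subseteq> K" using gen_K[OF S] .
    have bc: "b \<in> carrier G" using b K_car' by blast
    from eng(3) show ?case
    proof
      assume h1: "h1 \<in> generate G S"
      from eng(4) show ?case
      proof
        assume h2: "h2 \<in> generate G S"
        thus ?case using h1 by (simp add: generate.eng)
      next
        assume "h2 \<in> (\<lambda>x. b \<otimes> x) ` generate G S"
        then obtain v where v: "v \<in> generate G S" "h2 = b \<otimes> v" by blast
        have "h1 \<in> K" "v \<in> K" using h1 v gK by (auto dest: subsetD)
        hence "h1 \<otimes> h2 = b \<otimes> (h1 \<otimes> v)" using v(2) b K_lcomm[of h1 b v] by simp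
        thus ?case using v h1 by (auto intro: generate.eng)
      qed
    next
      assume "h1 \<in> (\<lambda>x. b \<otimes> x) ` generate G S"
      then obtain u where u: "u \<in> generate G S" "h1 = b \<otimes> u" by blast
      have uc: "u \<in> carrier G" using u gK K_car' by blast
      from eng(4) show ?case
      proof
        assume h2: "h2 \<in> generate G S"
        have h2c: "h2 \<in> carrier G" using h2 gK K_car' by blast
        have "h1 \<otimes> h2 = b \<otimes> (u \<otimes> h2)" using u bc uc h2c by (simp add: m_assoc)
        thus ?case using u h2 by (auto intro: generate.eng)
      next
        assume "h2 \<in> (\<lambda>x. b \<otimes> x) ` generate G S"
        then obtain v where v: "v \<in> generate G S" "h2 = b \<otimes> v" by blast
        have vc: "v \<in> carrier G" using v gK K_car' by blast
        have "h1 \<otimes> h2 = b \<otimes> (u \<otimes> (b \<otimes> v))" using u v bc uc vc by (simp add: m_assoc)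
        also have "u \<in> K" "v \<in> K" using u v gK by (auto dest: subsetD)
        hence "u \<otimes> (b \<otimes> v) = b \<otimes> (u \<otimes> v)" using b K_lcomm[of u b v] by simp
        also have "b \<otimes> (b \<otimes> (u \<otimes> v)) = u \<otimes> v" using b uc vc K_sq2 by simp
        finally show ?case using u v by (simp add: generate.eng)
      qed
    qed
  qed
qed

lemma gen_card: "finite S \<Longrightarrow> S \<subseteq> K \<Longrightarrow> finite (generate G S) \<and> card (generate G S) \<le> 2 ^ card S"
proof (induction S rule: finite_induct)
  case empty thus ?case by (simp add: generate_empty)
next
  case (insert b S)
  hence IH: "finite (generate G S)" "card (generate G S) \<le> 2 ^ card S" and b: "b \<in> K" and S: "S \<subseteq> K" by auto
  have sub: "generate G (insert b S) \<subseteq> generate G S \<union> (\<lambda>x. b \<otimes> x) ` generate G S"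
    by (rule gen_insert[OF S b])
  have f: "finite (generate G S \<union> (\<lambda>x. b \<otimes> x) ` generate G S)" using IH by simp
  have "card (generate G (insert b S)) \<le> card (generate G S \<union> (\<lambda>x. b \<otimes> x) ` generate G S)"
    by (rule card_mono[OF f sub])
  also have "\<dots> \<le> card (generate G S) + card ((\<lambda>x. b \<otimes> x) ` generate G S)" by (rule card_Un_le)
  also have "\<dots> \<le> card (generate G S) + card (generate G S)" using card_image_le[OF IH(1)] by simp
  also have "\<dots> \<le> 2 ^ card (insert b S)" using IH(2) insert(1,2) by simp
  finally show ?case using finite_subset[OF sub f] by simp
qed

lemma carrier_img: "carrier G \<subseteq> (\<lambda>p. hS (fst p) \<otimes> snd p) ` (Pow {1..n} \<times> K)"
proof
  fix a assume a: "a \<in> carrier G"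
  obtain k where k: "k \<in> K" "a = hS (\<phi> a) \<otimes> k" using decomp a by blast
  have "(\<phi> a, k) \<in> Pow {1..n} \<times> K" using phi_sub[OF a] k by simp
  moreover have "a = hS (fst (\<phi> a, k)) \<otimes> snd (\<phi> a, k)" unfolding fst_conv snd_conv by (rule k(2))
  ultimately show "a \<in> (\<lambda>p. hS (fst p) \<otimes> snd p) ` (Pow {1..n} \<times> K)" by (rule rev_image_eqI)
qed

lemma finite_Idx: "finite Idx" unfolding Idx_def by (rule finite_SigmaI) (auto intro: finite_subset)

lemma card_G: "finite (carrier G) \<and> card (carrier G) \<le> 2 ^ n * 2 ^ card Idx"
proof -
  have fB: "finite Bset" using finite_Idx by (simp add: Bset_def)
  have gB: "finite (generate G Bset)" "card (generate G Bset) \<le> 2 ^ card Bset"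
    using gen_card[OF fB Bset_K] by auto
  have fK: "finite K" using finite_subset[OF K_Bset gB(1)] .
  have "card K \<le> card (generate G Bset)" using card_mono[OF gB(1) K_Bset] .
  also have "\<dots> \<le> 2 ^ card Bset" by (rule gB(2))
  also have "\<dots> \<le> 2 ^ card Idx" unfolding Bset_def by (rule power_increasing[OF card_image_le[OF finite_Idx]]) simp
  finally have cK: "card K \<le> 2 ^ card Idx" .
  have fP: "finite (Pow {1..n} \<times> K)" using fK by simp
  have fG: "finite (carrier G)" using finite_subset[OF carrier_img finite_imageI[OF fP]] .
  have "card (carrier G) \<le> card ((\<lambda>p. hS (fst p) \<otimes> snd p) ` (Pow {1..n} \<times> K))"
    by (rule card_mono[OF finite_imageI[OF fP] carrier_img])
  also have "\<dots> \<le> card (Pow {1..n} \<times> K)" by (rule card_image_le[OF fP])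
  also have "\<dots> = 2 ^ n * card K" by (simp add: card_cartesian_product card_Pow)
  also have "\<dots> \<le> 2 ^ n * 2 ^ card Idx" using cK by simp
  finally show ?thesis using fG by simp
qed

lemma gen_all: "generate G (g ` {1..n}) = carrier G"
proof
  show "generate G (g ` {1..n}) \<subseteq> carrier G" using g_car by (intro generate_incl) auto
  have H: "subgroup (generate G (g ` {1..n})) G" using g_car by (intro generate_is_subgroup) auto
  have EH: "\<And>i x. i \<in> {1..n} \<Longrightarrow> x \<in> generate G (g ` {1..n}) \<Longrightarrow> E i x \<in> generate G (g ` {1..n})"
  proof -
    fix i x assume i: "i \<in> {1..n}" and x: "x \<in> generate G (g ` {1..n})"
    have gi: "g i \<in> generate G (g ` {1..n})" using i by (intro generate.incl) auto
    have "C (g i) x \<in> generate G (g ` {1..n})"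
      unfolding C_def by (intro subgroup.m_closed[OF H] subgroup.m_inv_closed[OF H] gi x)
    thus "E i x \<in> generate G (g ` {1..n})" unfolding E_def by (intro subgroup.m_closed[OF H] x)
  qed
  have "B0 \<subseteq> generate G (g ` {1..n})"
  proof
    fix y assume "y \<in> B0"
    then obtain w i j where w: "set w \<subseteq> {1..n}" and i: "i \<in> {1..n}" and j: "j \<in> {1..n}" and y: "y = Wd w (c i j)"
      by (auto simp: B0_def)
    have gi: "g i \<in> generate G (g ` {1..n})" and gj: "g j \<in> generate G (g ` {1..n})"
      using i j by (auto intro: generate.incl)
    have cH: "c i j \<in> generate G (g ` {1..n})" unfolding c_def by (intro subgroup.m_closed[OF H] gi gj)
    show "y \<in> generate G (g ` {1..n})" unfolding y using w
    proof (induction w)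
      case Nil thus ?case using cH by simp
    next
      case (Cons a w) thus ?case using EH[of a "Wd w (c i j)"] by simp
    qed
  qed
  hence KH: "K \<subseteq> generate G (g ` {1..n})" using K_B0 generate_subgroup_incl[OF _ H] by blast
  show "carrier G \<subseteq> generate G (g ` {1..n})"
  proof
    fix a assume a: "a \<in> carrier G"
    obtain k where k: "k \<in> K" "a = hS (\<phi> a) \<otimes> k" using decomp a by blast
    have "set (sorted_list_of_set (\<phi> a)) \<subseteq> {1..n}" using phi_sub[OF a]
      by (metis finite_atLeastAtMost rev_finite_subset set_sorted_list_of_set)
    hence "hS (\<phi> a) \<in> generate G (g ` {1..n})" unfolding hS_def by (rule hl_gen)
    moreover have "k \<in> generate G (g ` {1..n})" using KH k(1) by (rule subsetD)
    ultimately have "hS (\<phi> a) \<otimes> k \<in> generate G (g ` {1..n})" by (rule subgroup.m_closed[OF H])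
    thus "a \<in> generate G (g ` {1..n})" using k(2) by simp
  qed
qed

lemma lcs_sub: "subgroup (lcs G m) G"
proof (cases m)
  case 0 thus ?thesis by (simp add: subgroup_self)
next
  case (Suc k)
  have "{cm a b | a b. a \<in> carrier G \<and> b \<in> lcs G k} \<subseteq> carrier G"
  proof (induction k)
    case 0 thus ?case by auto
  next
    case (Suc k)
    have "lcs G (Suc k) \<subseteq> carrier G"
      by (simp add: comm_sub_cm) (rule generate_incl[OF Suc.IH])
    thus ?case by auto
  qed
  thus ?thesis using Suc by (simp add: comm_sub_cm generate_is_subgroup)
qed
lemma lcs_car: "lcs G m \<subseteq> carrier G" using lcs_sub subgroup.subset by blast
lemma lcs_normal: "a \<in> carrier G \<Longrightarrow> x \<in> lcs G m \<Longrightarrow> C a x \<in> lcs G m"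
proof (induction m arbitrary: x)
  case 0 thus ?case by simp
next
  case (Suc m)
  define S where "S = {cm a b | a b. a \<in> carrier G \<and> b \<in> lcs G m}"
  have Sc: "S \<subseteq> carrier G" unfolding S_def using lcs_car by (auto intro!: cm_car)
  have "x \<in> generate G S" using Suc(3) by (simp add: comm_sub_cm S_def)
  hence "C a x \<in> generate G S"
  proof (induction rule: generate.induct)
    case one thus ?case using Suc(2) by (simp add: C_def generate.one)
  next
    case (incl h)
    then obtain u v where uv: "u \<in> carrier G" "v \<in> lcs G m" "h = cm u v" by (auto simp: S_def)
    have vc: "v \<in> carrier G" using uv lcs_car by blast
    have "C a h = cm (C a u) (C a v)" using uv(1,3) vc Suc(2)
      by (simp add: C_def cm_def m_assoc inv_mult_group)
    moreover have "C a v \<in> lcs G m" using Suc.IH[OF Suc(2) uv(2)] .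
    moreover have "C a u \<in> carrier G" using uv(1) Suc(2) by simp
    ultimately have "C a h \<in> S" unfolding S_def by blast
    thus ?case by (rule generate.incl)
  next
    case (inv h)
    then obtain u v where uv: "u \<in> carrier G" "v \<in> lcs G m" "h = cm u v" by (auto simp: S_def)
    have vc: "v \<in> carrier G" using uv lcs_car by blast
    have hc: "h \<in> carrier G" using uv vc by simp
    have "C a (inv h) = inv (C a h)" using hc Suc(2) by (simp add: C_def inv_mult_group m_assoc)
    moreover have "C a v \<in> lcs G m" using Suc.IH[OF Suc(2) uv(2)] .
    moreover have "C a h = cm (C a u) (C a v)" using uv(1,3) vc Suc(2)
      by (simp add: C_def cm_def m_assoc inv_mult_group)
    moreover have "C a u \<in> carrier G" using uv(1) Suc(2) by simp
    ultimately have "C a (inv h) = inv (cm (C a u) (C a v))" "cm (C a u) (C a v) \<in> S"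
      unfolding S_def by auto
    thus ?case using generate.inv by metis
  next
    case (eng h1 h2)
    have "h1 \<in> carrier G" "h2 \<in> carrier G" using eng(1,2) generate_in_carrier[OF Sc] by auto
    hence "C a (h1 \<otimes> h2) = C a h1 \<otimes> C a h2" using C_mult Suc(2) by blast
    thus ?case using eng(3,4) generate.eng by simp
  qed
  thus ?case by (simp add: comm_sub_cm S_def)
qed
lemma lcs_dec: "lcs G (Suc m) \<subseteq> lcs G m"
proof -
  have "{cm a b | a b. a \<in> carrier G \<and> b \<in> lcs G m} \<subseteq> lcs G m"
  proof
    fix y assume "y \<in> {cm a b | a b. a \<in> carrier G \<and> b \<in> lcs G m}"
    then obtain a b where ab: "a \<in> carrier G" "b \<in> lcs G m" "y = cm a b" by blast
    have bc: "b \<in> carrier G" using ab lcs_car by blast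
    have "y = C a b \<otimes> inv b" using ab bc by (simp add: cm_def C_def)
    moreover have "C a b \<in> lcs G m" using lcs_normal ab by blast
    moreover have "inv b \<in> lcs G m" using subgroup.m_inv_closed[OF lcs_sub ab(2)] .
    ultimately show "y \<in> lcs G m" using subgroup.m_closed[OF lcs_sub] by simp
  qed
  thus ?thesis by (simp add: comm_sub_cm generate_subgroup_incl[OF _ lcs_sub])
qed
lemma lcs_antimono: "m \<le> k \<Longrightarrow> lcs G k \<subseteq> lcs G m"
proof (induction k)
  case 0 thus ?case by simp
next
  case (Suc k)
  thus ?case using lcs_dec[of k] by (cases "m = Suc k") auto
qed
definition N0 where "N0 = Suc (Suc n)"
lemma lcs_big: "N0 \<le> m \<Longrightarrow> lcs G m = {\<one>}"
  using lcs_antimono[of N0 m] lcs_triv subgroup.one_closed[OF lcs_sub[of m]] unfolding N0_def by auto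

definition R where "R m = rcosets\<^bsub>G\<lparr>carrier := lcs G (m - 1)\<rparr>\<^esub> (lcs G m)"
definition P where "P j = {x. x 0 = {} \<and> (\<forall>m\<in>{1..j}. x m \<in> R m) \<and> (\<forall>m>j. x m = lcs G m)}"

lemma R_lagrange:
  assumes fin: "finite (carrier G)"
  shows "card (R (Suc j)) * card (lcs G (Suc j)) = card (lcs G j) \<and> finite (R (Suc j))"
proof -
  let ?H = "G\<lparr>carrier := lcs G j\<rparr>"
  have gH: "group ?H" by (rule subgroup_imp_group[OF lcs_sub])
  have sH: "subgroup (lcs G (Suc j)) ?H" by (rule subgroup_incl[OF lcs_sub lcs_sub lcs_dec])
  have "card (rcosets\<^bsub>?H\<^esub> (lcs G (Suc j))) * card (lcs G (Suc j)) = order ?H"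
    by (rule group.lagrange[OF gH sH])
  moreover have "order ?H = card (lcs G j)" by (simp add: order_def)
  moreover have "rcosets\<^bsub>?H\<^esub> (lcs G (Suc j)) \<subseteq> Pow (lcs G j)"
    using group.rcosets_subset_PowG[OF gH sH] by simp
  moreover have "finite (Pow (lcs G j))" using finite_subset[OF lcs_car fin] by simp
  ultimately show ?thesis by (simp add: R_def finite_subset)
qed

lemma P_card: "finite (carrier G) \<Longrightarrow> finite (P j) \<and> card (P j) * card (lcs G j) = card (carrier G)"
proof (induction j)
  case 0
  have "P 0 = {\<lambda>m. if m = 0 then {} else lcs G m}"
    by (auto simp: P_def fun_eq_iff)
  thus ?case by simp
next
  case (Suc j)
  have IH: "finite (P j)" "card (P j) * card (lcs G j) = card (carrier G)" using Suc by auto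
  have RL: "card (R (Suc j)) * card (lcs G (Suc j)) = card (lcs G j)" "finite (R (Suc j))"
    using R_lagrange[OF Suc(2)] by auto
  define f where "f = (\<lambda>p::(nat \<Rightarrow> 'a set) \<times> 'a set. (fst p)(Suc j := snd p))"
  have img: "P (Suc j) = f ` (P j \<times> R (Suc j))"
  proof
    show "f ` (P j \<times> R (Suc j)) \<subseteq> P (Suc j)"
      by (auto simp: f_def P_def)
    show "P (Suc j) \<subseteq> f ` (P j \<times> R (Suc j))"
    proof
      fix y assume y: "y \<in> P (Suc j)"
      define x where "x = y(Suc j := lcs G (Suc j))"
      have "x \<in> P j" using y by (auto simp: x_def P_def)
      moreover have "y (Suc j) \<in> R (Suc j)" using y by (auto simp: P_def)
      moreover have "y = f (x, y (Suc j))" by (simp add: f_def x_def)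
      ultimately show "y \<in> f ` (P j \<times> R (Suc j))" by blast
    qed
  qed
  have inj: "inj_on f (P j \<times> R (Suc j))"
  proof (rule inj_onI)
    fix p q assume p: "p \<in> P j \<times> R (Suc j)" and q: "q \<in> P j \<times> R (Suc j)" and e: "f p = f q"
    have "fst p (Suc j) = lcs G (Suc j)" "fst q (Suc j) = lcs G (Suc j)" using p q by (auto simp: P_def)
    hence "fst p = fst q"
    proof -
      assume h: "fst p (Suc j) = lcs G (Suc j)" "fst q (Suc j) = lcs G (Suc j)"
      show "fst p = fst q"
      proof
        fix m show "fst p m = fst q m"
        proof (cases "m = Suc j")
          case True thus ?thesis using h by simp
        next
          case False
          have "f p m = f q m" using e by simp
          thus ?thesis using False by (simp add: f_def)
        qed
      qed
    qed
    moreover have "snd p = snd q" using e fun_upd_same by (metis f_def)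
    ultimately show "p = q" by (simp add: prod_eq_iff)
  qed
  have fin: "finite (P (Suc j))" using img IH(1) RL(2) by simp
  have "card (P (Suc j)) = card (P j) * card (R (Suc j))"
    using img card_image[OF inj] by (simp add: card_cartesian_product)
  hence "card (P (Suc j)) * card (lcs G (Suc j)) = card (P j) * card (lcs G j)"
    using RL(1) by (simp add: mult.assoc)
  thus ?case using fin IH(2) by simp
qed

lemma R_big: "N0 < m \<Longrightarrow> R m = {{\<one>}}"
proof -
  assume m: "N0 < m"
  have "lcs G (m - 1) = {\<one>}" "lcs G m = {\<one>}" using m lcs_big by auto
  thus ?thesis by (simp add: R_def RCOSETS_def r_coset_def)
qed

lemma Lbul_eq: "Lbul G = P N0"
proof
  show "Lbul G \<subseteq> P N0"
  proof
    fix x assume x: "x \<in> Lbul G"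
    have "\<forall>m>N0. x m = lcs G m"
    proof (intro allI impI)
      fix m assume m: "N0 < m"
      hence "x m \<in> R m" using x by (auto simp: Lbul_def R_def)
      thus "x m = lcs G m" using R_big[OF m] lcs_big m by simp
    qed
    thus "x \<in> P N0" using x by (auto simp: Lbul_def P_def R_def)
  qed
  show "P N0 \<subseteq> Lbul G"
  proof
    fix x assume x: "x \<in> P N0"
    have A: "\<forall>m\<ge>1. x m \<in> R m"
    proof (intro allI impI)
      fix m :: nat assume m: "1 \<le> m"
      show "x m \<in> R m"
      proof (cases "m \<le> N0")
        case True thus ?thesis using x m by (auto simp: P_def)
      next
        case False
        hence "x m = lcs G m" using x by (auto simp: P_def)
        thus ?thesis using R_big lcs_big False by simp
      qed
    qed
    have "{m. m \<ge> 1 \<and> x m \<noteq> lcs G m} \<subseteq> {1..N0}" using x by (auto simp: P_def)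
    hence "finite {m. m \<ge> 1 \<and> x m \<noteq> lcs G m}" using finite_subset by blast
    thus "x \<in> Lbul G" using x A by (auto simp: Lbul_def P_def R_def)
  qed
qed

lemma Lbul_card: "finite (Lbul G) \<and> card (Lbul G) = card (carrier G)"
proof -
  have fG: "finite (carrier G)" using card_G by simp
  have "finite (P N0) \<and> card (P N0) * card (lcs G N0) = card (carrier G)" using P_card[OF fG] .
  thus ?thesis using lcs_big[of N0] Lbul_eq by simp
qed

lemma card_Idx: "n + card Idx = n * 2 ^ (n - 1) + n + 1 - 2 ^ n"
proof -
  have "card Idx = (\<Sum>T\<in>Pow {1..n}. card (T - {Min T}))"
    unfolding Idx_def by (rule card_SigmaI) (auto intro: finite_subset)
  also have "\<dots> = (\<Sum>T\<in>Pow {1..n}. card T - 1)"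
  proof (rule sum.cong[OF refl])
    fix T assume T: "T \<in> Pow {1..n}"
    hence fT: "finite T" using finite_subset by auto
    show "card (T - {Min T}) = card T - 1"
    proof (cases "T = {}")
      case True thus ?thesis by simp
    next
      case False thus ?thesis using fT Min_in by (simp add: card_Diff_singleton)
    qed
  qed
  finally have cI: "card Idx = (\<Sum>T\<in>Pow {1..n}. card T - 1)" .
  define S where "S = (\<Sum>T\<in>Pow {1..n}. card T)"
  have ps: "S * 2 = n * 2 ^ n" "card Idx + 2 ^ n = S + 1"
    using pow_sums[of "{1..n}"] cI by (simp_all add: S_def)
  have Sn: "S = n * 2 ^ (n - 1)"
  proof (cases n)
    case 0 thus ?thesis using ps(1) by simp
  next
    case (Suc k) thus ?thesis using ps(1) by simp
  qed
  show ?thesis using ps(2) Sn by simp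
qed
end

theorem proposition3p9:
  fixes n :: nat and G :: "('a, 'b) monoid_scheme" and \<phi> :: "'a \<Rightarrow> nat set" and g :: "nat \<Rightarrow> 'a"
  assumes "expansion_group n G \<phi> g"
  shows "finite (carrier G) \<and> finite (Lbul G) \<and> card (carrier G) = card (Lbul G)
    \<and> card (Lbul G) \<le> 2 ^ (n * 2 ^ (n - 1) + n + 1 - 2 ^ n)
    \<and> generate G (g ` {1..n}) = carrier G"
proof -
  have grp: "group G" using assms by (simp add: expansion_group_def)
  interpret eg G n \<phi> g using grp assms by (simp add: eg_def eg_axioms_def)
  have cG: "finite (carrier G)" "card (carrier G) \<le> 2 ^ n * 2 ^ card Idx" using card_G by auto
  have L: "finite (Lbul G)" "card (Lbul G) = card (carrier G)" using Lbul_card by auto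
  have "card (Lbul G) \<le> 2 ^ (n + card Idx)" using cG(2) L(2) by (simp add: power_add)
  hence "card (Lbul G) \<le> 2 ^ (n * 2 ^ (n - 1) + n + 1 - 2 ^ n)" using card_Idx by simp
  thus ?thesis using cG(1) L gen_all by simp
qed

end
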